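(* Let $\mathcal A$ be an abelian category and let $0\to F\xrightarrow{i} M\xrightarrow{d} C\to 0$ be a fully invariant short exact sequence in $\mathcal A$. (1) Assume that $M$ is (strongly) self-$F$-split, and let $N$ be a direct summand of $M$ with $F\subseteq N$. Then for every (fully invariant) direct summand $K$ of $M$, $K\cap N$ is a (fully invariant) direct summand of $M$. (2) Assume that $M$ is dual (strongly) self-$F$-split, and let $N$ be a direct summand of $M$ with $N\subseteq F$. Then for every (fully invariant) direct summand $K$ of $M$, $K+N$ is a (fully invariant) direct summand of $M$.
   Context: Convention: each statement containing parenthetical words holds in two versions: one obtained by deleting all parenthetical words and one obtained by keeping all of them. Let $\mathcal A$ be an abelian category. A morphism $s:X\to Y$ is a section if $ts=1_X$ for some $t$, and a retraction if $st=1_Y$ for some $t$. A monomorphism $i:K\to M$ is fully invariant if for every morphism $h:M\to M$ there is $\alpha:K\to K$ with $hi=i\alpha$; an epimorphism $d:M\to C$ is fully coinvariant if for every $h:M\to M$ there is $\beta:C\to C$ with $dh=\beta d$. A subobject is fully invariant if its inclusion is. A short exact sequence $0\to F\xrightarrow{i}N\xrightarrow{d}C\to 0$ is fully invariant if $i$ is fully invariant. A (fully invariant) direct summand is a subobject whose inclusion is a (fully invariant) section. For an object $M$ and a fully invariant short exact sequence $0\to F\xrightarrow{i}N\xrightarrow{d}C\to 0$: $N$ is (strongly) $M$-$F$-split if for every morphism $g:M\to N$, $\ker(dg)$ (equivalently the morphism $P\to M$ in the pullback of $i$ along $g$) is a (fully invariant) section; $N$ is dual (strongly) $M$-$F$-split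 if for every morphism $g:N\to M$, $\mathrm{coker}(gi)$ (equivalently the morphism $M\to Q$ in the pushout of $d$ along $g$) is a (fully coinvariant) retraction. Self-versions: take $M=N$. *)

theory Defs
  imports Main
begin

text \<open>An explicit encoding of (small) abelian categories: a set of objects, a set of arrows,
  source/target, composition (cmp g f = g after f), identities, and the preadditive
  structure on hom-sets (add, zer, neg).\<close>

record ('o, 'm) acat =
  ob  :: "'o set"
  ar  :: "'m set"
  src :: "'m \<Rightarrow> 'o"
  tgt :: "'m \<Rightarrow> 'o"
  cmp :: "'m \<Rightarrow> 'm \<Rightarrow> 'm"
  idn :: "'o \<Rightarrow> 'm"
  add :: "'m \<Rightarrow> 'm \<Rightarrow> 'm"
  zer :: "'o \<Rightarrow> 'o \<Rightarrow> 'm"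
  neg :: "'m \<Rightarrow> 'm"

definition hom :: "('o, 'm, 'x) acat_scheme \<Rightarrow> 'o \<Rightarrow> 'o \<Rightarrow> 'm set" where
  "hom A X Y = {f \<in> ar A. src A f = X \<and> tgt A f = Y}"

definition category :: "('o, 'm, 'x) acat_scheme \<Rightarrow> bool" where
  "category A \<longleftrightarrow>
     (\<forall>f\<in>ar A. src A f \<in> ob A \<and> tgt A f \<in> ob A) \<and>
     (\<forall>X\<in>ob A. idn A X \<in> hom A X X) \<and>
     (\<forall>f\<in>ar A. \<forall>g\<in>ar A. tgt A f = src A g \<longrightarrow> cmp A g f \<in> hom A (src A f) (tgt A g)) \<and>
     (\<forall>f\<in>ar A. cmp A f (idn A (src A f)) = f \<and> cmp A (idn A (tgt A f)) f = f) \<and>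
     (\<forall>f\<in>ar A. \<forall>g\<in>ar A. \<forall>h\<in>ar A. tgt A f = src A g \<and> tgt A g = src A h \<longrightarrow>
        cmp A h (cmp A g f) = cmp A (cmp A h g) f)"

definition preadditive :: "('o, 'm, 'x) acat_scheme \<Rightarrow> bool" where
  "preadditive A \<longleftrightarrow>
     (\<forall>X\<in>ob A. \<forall>Y\<in>ob A.
        zer A X Y \<in> hom A X Y \<and>
        (\<forall>f\<in>hom A X Y. \<forall>g\<in>hom A X Y. add A f g \<in> hom A X Y) \<and>
        (\<forall>f\<in>hom A X Y. neg A f \<in> hom A X Y) \<and>
        (\<forall>f\<in>hom A X Y. \<forall>g\<in>hom A X Y. \<forall>h\<in>hom A X Y.
            add A (add A f g) h = add A f (add A g h)) \<and>
        (\<forall>f\<in>hom A X Y. \<forall>g\<in>hom A X Y. add A f g = add A g f) \<and>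
        (\<forall>f\<in>hom A X Y. add A f (zer A X Y) = f) \<and>
        (\<forall>f\<in>hom A X Y. add A f (neg A f) = zer A X Y)) \<and>
     (\<forall>X\<in>ob A. \<forall>Y\<in>ob A. \<forall>Z\<in>ob A.
        (\<forall>f\<in>hom A X Y. \<forall>g\<in>hom A Y Z. \<forall>g'\<in>hom A Y Z.
            cmp A (add A g g') f = add A (cmp A g f) (cmp A g' f)) \<and>
        (\<forall>f\<in>hom A X Y. \<forall>f'\<in>hom A X Y. \<forall>g\<in>hom A Y Z.
            cmp A g (add A f f') = add A (cmp A g f) (cmp A g f')))"

definition mono :: "('o, 'm, 'x) acat_scheme \<Rightarrow> 'm \<Rightarrow> bool" where
  "mono A f \<longleftrightarrow> f \<in> ar A \<and>
     (\<forall>g\<in>ar A. \<forall>h\<in>ar A. tgt A g = src A f \<and> tgt A h = src A f \<and> src A g = src A h \<and>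
        cmp A f g = cmp A f h \<longrightarrow> g = h)"

definition epi :: "('o, 'm, 'x) acat_scheme \<Rightarrow> 'm \<Rightarrow> bool" where
  "epi A f \<longleftrightarrow> f \<in> ar A \<and>
     (\<forall>g\<in>ar A. \<forall>h\<in>ar A. src A g = tgt A f \<and> src A h = tgt A f \<and> tgt A g = tgt A h \<and>
        cmp A g f = cmp A h f \<longrightarrow> g = h)"

definition is_kernel :: "('o, 'm, 'x) acat_scheme \<Rightarrow> 'm \<Rightarrow> 'm \<Rightarrow> bool" where
  "is_kernel A k f \<longleftrightarrow> k \<in> ar A \<and> f \<in> ar A \<and> tgt A k = src A f \<and>
     cmp A f k = zer A (src A k) (tgt A f) \<and>
     (\<forall>g\<in>ar A. tgt A g = src A f \<and> cmp A f g = zer A (src A g) (tgt A f) \<longrightarrow>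
        (\<exists>!u. u \<in> hom A (src A g) (src A k) \<and> cmp A k u = g))"

definition is_cokernel :: "('o, 'm, 'x) acat_scheme \<Rightarrow> 'm \<Rightarrow> 'm \<Rightarrow> bool" where
  "is_cokernel A c f \<longleftrightarrow> c \<in> ar A \<and> f \<in> ar A \<and> src A c = tgt A f \<and>
     cmp A c f = zer A (src A f) (tgt A c) \<and>
     (\<forall>g\<in>ar A. src A g = tgt A f \<and> cmp A g f = zer A (src A f) (tgt A g) \<longrightarrow>
        (\<exists>!u. u \<in> hom A (tgt A c) (tgt A g) \<and> cmp A u c = g))"

definition is_biproduct ::
  "('o, 'm, 'x) acat_scheme \<Rightarrow> 'o \<Rightarrow> 'o \<Rightarrow> 'o \<Rightarrow> 'm \<Rightarrow> 'm \<Rightarrow> 'm \<Rightarrow> 'm \<Rightarrow> bool" where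
  "is_biproduct A X Y P p1 p2 j1 j2 \<longleftrightarrow> P \<in> ob A \<and>
     p1 \<in> hom A P X \<and> p2 \<in> hom A P Y \<and> j1 \<in> hom A X P \<and> j2 \<in> hom A Y P \<and>
     cmp A p1 j1 = idn A X \<and> cmp A p2 j2 = idn A Y \<and>
     cmp A p1 j2 = zer A Y X \<and> cmp A p2 j1 = zer A X Y \<and>
     add A (cmp A j1 p1) (cmp A j2 p2) = idn A P"

definition abelian :: "('o, 'm, 'x) acat_scheme \<Rightarrow> bool" where
  "abelian A \<longleftrightarrow> category A \<and> preadditive A \<and>
     (\<exists>Z\<in>ob A. idn A Z = zer A Z Z) \<and>
     (\<forall>X\<in>ob A. \<forall>Y\<in>ob A. \<exists>P p1 p2 j1 j2. is_biproduct A X Y P p1 p2 j1 j2) \<and>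
     (\<forall>f\<in>ar A. \<exists>k. is_kernel A k f) \<and>
     (\<forall>f\<in>ar A. \<exists>c. is_cokernel A c f) \<and>
     (\<forall>m. mono A m \<longrightarrow> (\<exists>f. is_kernel A m f)) \<and>
     (\<forall>e. epi A e \<longrightarrow> (\<exists>f. is_cokernel A e f))"

definition is_section :: "('o, 'm, 'x) acat_scheme \<Rightarrow> 'm \<Rightarrow> bool" where
  "is_section A s \<longleftrightarrow> s \<in> ar A \<and> (\<exists>t\<in>hom A (tgt A s) (src A s). cmp A t s = idn A (src A s))"

definition is_retraction :: "('o, 'm, 'x) acat_scheme \<Rightarrow> 'm \<Rightarrow> bool" where
  "is_retraction A s \<longleftrightarrow> s \<in> ar A \<and> (\<exists>t\<in>hom A (tgt A s) (src A s). cmp A s t = idn A (tgt A s))"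

definition fully_invariant_mono :: "('o, 'm, 'x) acat_scheme \<Rightarrow> 'm \<Rightarrow> bool" where
  "fully_invariant_mono A i \<longleftrightarrow> mono A i \<and>
     (\<forall>h\<in>hom A (tgt A i) (tgt A i). \<exists>\<alpha>\<in>hom A (src A i) (src A i). cmp A h i = cmp A i \<alpha>)"

definition fully_coinvariant_epi :: "('o, 'm, 'x) acat_scheme \<Rightarrow> 'm \<Rightarrow> bool" where
  "fully_coinvariant_epi A d \<longleftrightarrow> epi A d \<and>
     (\<forall>h\<in>hom A (src A d) (src A d). \<exists>\<beta>\<in>hom A (tgt A d) (tgt A d). cmp A d h = cmp A \<beta> d)"

definition short_exact :: "('o, 'm, 'x) acat_scheme \<Rightarrow> 'm \<Rightarrow> 'm \<Rightarrow> bool" where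
  "short_exact A i d \<longleftrightarrow> mono A i \<and> epi A d \<and> tgt A i = src A d \<and>
     is_kernel A i d \<and> is_cokernel A d i"

definition M_F_split :: "('o, 'm, 'x) acat_scheme \<Rightarrow> 'o \<Rightarrow> 'm \<Rightarrow> 'm \<Rightarrow> bool" where
  "M_F_split A M i d \<longleftrightarrow>
     (\<forall>g\<in>hom A M (tgt A i). \<forall>k. is_kernel A k (cmp A d g) \<longrightarrow> is_section A k)"

definition strongly_M_F_split :: "('o, 'm, 'x) acat_scheme \<Rightarrow> 'o \<Rightarrow> 'm \<Rightarrow> 'm \<Rightarrow> bool" where
  "strongly_M_F_split A M i d \<longleftrightarrow>
     (\<forall>g\<in>hom A M (tgt A i). \<forall>k. is_kernel A k (cmp A d g) \<longrightarrow>
        is_section A k \<and> fully_invariant_mono A k)"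

definition dual_M_F_split :: "('o, 'm, 'x) acat_scheme \<Rightarrow> 'o \<Rightarrow> 'm \<Rightarrow> 'm \<Rightarrow> bool" where
  "dual_M_F_split A M i d \<longleftrightarrow>
     (\<forall>g\<in>hom A (tgt A i) M. \<forall>c. is_cokernel A c (cmp A g i) \<longrightarrow> is_retraction A c)"

definition dual_strongly_M_F_split :: "('o, 'm, 'x) acat_scheme \<Rightarrow> 'o \<Rightarrow> 'm \<Rightarrow> 'm \<Rightarrow> bool" where
  "dual_strongly_M_F_split A M i d \<longleftrightarrow>
     (\<forall>g\<in>hom A (tgt A i) M. \<forall>c. is_cokernel A c (cmp A g i) \<longrightarrow>
        is_retraction A c \<and> fully_coinvariant_epi A c)"

text \<open>Subobjects are represented by their inclusion monomorphisms.\<close>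
definition direct_summand :: "('o, 'm, 'x) acat_scheme \<Rightarrow> 'm \<Rightarrow> 'o \<Rightarrow> bool" where
  "direct_summand A k M \<longleftrightarrow> is_section A k \<and> tgt A k = M"

definition fi_direct_summand :: "('o, 'm, 'x) acat_scheme \<Rightarrow> 'm \<Rightarrow> 'o \<Rightarrow> bool" where
  "fi_direct_summand A k M \<longleftrightarrow> direct_summand A k M \<and> fully_invariant_mono A k"

definition subobj_le :: "('o, 'm, 'x) acat_scheme \<Rightarrow> 'm \<Rightarrow> 'm \<Rightarrow> bool" where
  "subobj_le A a b \<longleftrightarrow> (\<exists>u\<in>hom A (src A a) (src A b). a = cmp A b u)"

definition is_pullback :: "('o, 'm, 'x) acat_scheme \<Rightarrow> 'm \<Rightarrow> 'm \<Rightarrow> 'm \<Rightarrow> 'm \<Rightarrow> bool" where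
  "is_pullback A k n p1 p2 \<longleftrightarrow> k \<in> ar A \<and> n \<in> ar A \<and> tgt A k = tgt A n \<and>
     p1 \<in> hom A (src A p1) (src A k) \<and> p2 \<in> hom A (src A p1) (src A n) \<and>
     cmp A k p1 = cmp A n p2 \<and>
     (\<forall>a\<in>ar A. \<forall>b\<in>ar A. tgt A a = src A k \<and> tgt A b = src A n \<and> src A a = src A b \<and>
        cmp A k a = cmp A n b \<longrightarrow>
        (\<exists>!u. u \<in> hom A (src A a) (src A p1) \<and> cmp A p1 u = a \<and> cmp A p2 u = b))"

definition is_intersection :: "('o, 'm, 'x) acat_scheme \<Rightarrow> 'm \<Rightarrow> 'm \<Rightarrow> 'm \<Rightarrow> bool" where
  "is_intersection A k n m \<longleftrightarrow> (\<exists>p1 p2. is_pullback A k n p1 p2 \<and> m = cmp A k p1)"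

text \<open>m represents the sum K + N of subobjects k, n: it is the image (mono part of an
  epi-mono factorisation) of the map K \<oplus> N \<rightarrow> M induced by k and n.\<close>
definition is_sum :: "('o, 'm, 'x) acat_scheme \<Rightarrow> 'm \<Rightarrow> 'm \<Rightarrow> 'm \<Rightarrow> bool" where
  "is_sum A k n m \<longleftrightarrow> (\<exists>P p1 p2 j1 j2 e.
     is_biproduct A (src A k) (src A n) P p1 p2 j1 j2 \<and>
     mono A m \<and> tgt A m = tgt A k \<and> epi A e \<and> e \<in> hom A P (src A m) \<and>
     cmp A m e = add A (cmp A k p1) (cmp A n p2))"

end

theory Submission imports Defs begin

locale abc = fixes A :: "('o,'m) acat" assumes abel: "abelian A"
begin

lemma cat: "category A" and pre: "preadditive A" using abel unfolding abelian_def by auto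

lemma src_ob[simp]: "f \<in> ar A \<Longrightarrow> src A f \<in> ob A" using cat unfolding category_def by blast
lemma tgt_ob[simp]: "f \<in> ar A \<Longrightarrow> tgt A f \<in> ob A" using cat unfolding category_def by blast

lemma idn_ar[simp]: "X \<in> ob A \<Longrightarrow> idn A X \<in> ar A" and src_idn[simp]: "X \<in> ob A \<Longrightarrow> src A (idn A X) = X"
  and tgt_idn[simp]: "X \<in> ob A \<Longrightarrow> tgt A (idn A X) = X"
  using cat unfolding category_def hom_def by auto

lemma cmp_ar[simp]: "f \<in> ar A \<Longrightarrow> g \<in> ar A \<Longrightarrow> tgt A f = src A g \<Longrightarrow> cmp A g f \<in> ar A"
  and src_cmp[simp]: "f \<in> ar A \<Longrightarrow> g \<in> ar A \<Longrightarrow> tgt A f = src A g \<Longrightarrow> src A (cmp A g f) = src A f"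
  and tgt_cmp[simp]: "f \<in> ar A \<Longrightarrow> g \<in> ar A \<Longrightarrow> tgt A f = src A g \<Longrightarrow> tgt A (cmp A g f) = tgt A g"
  using cat unfolding category_def hom_def by auto

lemma idr[simp]: "f \<in> ar A \<Longrightarrow> X = src A f \<Longrightarrow> cmp A f (idn A X) = f"
  and idl[simp]: "f \<in> ar A \<Longrightarrow> X = tgt A f \<Longrightarrow> cmp A (idn A X) f = f"
  using cat unfolding category_def by auto

lemma assoc: "f \<in> ar A \<Longrightarrow> g \<in> ar A \<Longrightarrow> h \<in> ar A \<Longrightarrow> tgt A f = src A g \<Longrightarrow> tgt A g = src A h \<Longrightarrow>
   cmp A (cmp A h g) f = cmp A h (cmp A g f)"
  using cat unfolding category_def by auto

lemma zer_ar[simp]: "X \<in> ob A \<Longrightarrow> Y \<in> ob A \<Longrightarrow> zer A X Y \<in> ar A"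
  and src_zer[simp]: "X \<in> ob A \<Longrightarrow> Y \<in> ob A \<Longrightarrow> src A (zer A X Y) = X"
  and tgt_zer[simp]: "X \<in> ob A \<Longrightarrow> Y \<in> ob A \<Longrightarrow> tgt A (zer A X Y) = Y"
  using pre unfolding preadditive_def hom_def by auto

lemma homI: "f \<in> ar A \<Longrightarrow> src A f = X \<Longrightarrow> tgt A f = Y \<Longrightarrow> f \<in> hom A X Y" unfolding hom_def by auto
lemma homD: "f \<in> hom A X Y \<Longrightarrow> f \<in> ar A \<and> src A f = X \<and> tgt A f = Y" unfolding hom_def by auto

lemma add_ar[simp]: "f \<in> ar A \<Longrightarrow> g \<in> ar A \<Longrightarrow> src A f = src A g \<Longrightarrow> tgt A f = tgt A g \<Longrightarrow> add A f g \<in> ar A"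
  and src_add[simp]: "f \<in> ar A \<Longrightarrow> g \<in> ar A \<Longrightarrow> src A f = src A g \<Longrightarrow> tgt A f = tgt A g \<Longrightarrow> src A (add A f g) = src A f"
  and tgt_add[simp]: "f \<in> ar A \<Longrightarrow> g \<in> ar A \<Longrightarrow> src A f = src A g \<Longrightarrow> tgt A f = tgt A g \<Longrightarrow> tgt A (add A f g) = tgt A f"
proof -
  assume a: "f \<in> ar A" "g \<in> ar A" "src A f = src A g" "tgt A f = tgt A g"
  have "f \<in> hom A (src A f) (tgt A f)" "g \<in> hom A (src A f) (tgt A f)" using a by (auto simp: hom_def)
  then have "add A f g \<in> hom A (src A f) (tgt A f)" using pre a unfolding preadditive_def by simp
  then show "add A f g \<in> ar A" "src A (add A f g) = src A f" "tgt A (add A f g) = tgt A f" by (auto simp: hom_def)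
qed

lemma neg_ar[simp]: "f \<in> ar A \<Longrightarrow> neg A f \<in> ar A"
  and src_neg[simp]: "f \<in> ar A \<Longrightarrow> src A (neg A f) = src A f"
  and tgt_neg[simp]: "f \<in> ar A \<Longrightarrow> tgt A (neg A f) = tgt A f"
proof -
  assume a: "f \<in> ar A"
  have "f \<in> hom A (src A f) (tgt A f)" using a by (auto simp: hom_def)
  then have "neg A f \<in> hom A (src A f) (tgt A f)" using pre a unfolding preadditive_def by simp
  then show "neg A f \<in> ar A" "src A (neg A f) = src A f" "tgt A (neg A f) = tgt A f" by (auto simp: hom_def)
qed

lemma add_assoc: "f \<in> ar A \<Longrightarrow> g \<in> ar A \<Longrightarrow> h \<in> ar A \<Longrightarrow> src A f = src A g \<Longrightarrow> tgt A f = tgt A g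
  \<Longrightarrow> src A h = src A g \<Longrightarrow> tgt A h = tgt A g \<Longrightarrow> add A (add A f g) h = add A f (add A g h)"
proof -
  assume a: "f \<in> ar A" "g \<in> ar A" "h \<in> ar A" "src A f = src A g" "tgt A f = tgt A g" "src A h = src A g" "tgt A h = tgt A g"
  have "f \<in> hom A (src A f) (tgt A f)" "g \<in> hom A (src A f) (tgt A f)" "h \<in> hom A (src A f) (tgt A f)" using a by (auto simp: hom_def)
  moreover have "src A f \<in> ob A" "tgt A f \<in> ob A" using a by auto
  ultimately show ?thesis using pre unfolding preadditive_def by blast
qed

lemma add_comm: "f \<in> ar A \<Longrightarrow> g \<in> ar A \<Longrightarrow> src A f = src A g \<Longrightarrow> tgt A f = tgt A g \<Longrightarrow> add A f g = add A g f"
proof -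
  assume a: "f \<in> ar A" "g \<in> ar A" "src A f = src A g" "tgt A f = tgt A g"
  have "f \<in> hom A (src A f) (tgt A f)" "g \<in> hom A (src A f) (tgt A f)" using a by (auto simp: hom_def)
  moreover have "src A f \<in> ob A" "tgt A f \<in> ob A" using a by auto
  ultimately show ?thesis using pre unfolding preadditive_def by blast
qed

lemma add_zr[simp]: "f \<in> ar A \<Longrightarrow> X = src A f \<Longrightarrow> Y = tgt A f \<Longrightarrow> add A f (zer A X Y) = f"
  and add_negr[simp]: "f \<in> ar A \<Longrightarrow> add A f (neg A f) = zer A (src A f) (tgt A f)"
proof -
  assume a: "f \<in> ar A"
  have "f \<in> hom A (src A f) (tgt A f)" using a by (auto simp: hom_def)
  then show "X = src A f \<Longrightarrow> Y = tgt A f \<Longrightarrow> add A f (zer A X Y) = f" "add A f (neg A f) = zer A (src A f) (tgt A f)"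
    using pre a unfolding preadditive_def by simp_all
qed

lemma add_zl[simp]: "f \<in> ar A \<Longrightarrow> X = src A f \<Longrightarrow> Y = tgt A f \<Longrightarrow> add A (zer A X Y) f = f"
  by (subst add_comm) auto

lemma distl: "f \<in> ar A \<Longrightarrow> g \<in> ar A \<Longrightarrow> g' \<in> ar A \<Longrightarrow> tgt A f = src A g \<Longrightarrow> src A g = src A g' \<Longrightarrow> tgt A g = tgt A g'
  \<Longrightarrow> cmp A (add A g g') f = add A (cmp A g f) (cmp A g' f)"
proof -
  assume a: "f \<in> ar A" "g \<in> ar A" "g' \<in> ar A" "tgt A f = src A g" "src A g = src A g'" "tgt A g = tgt A g'"
  have "f \<in> hom A (src A f) (tgt A f)" "g \<in> hom A (tgt A f) (tgt A g)" "g' \<in> hom A (tgt A f) (tgt A g)" using a by (auto simp: hom_def)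
  moreover have "src A f \<in> ob A" "tgt A f \<in> ob A" "tgt A g \<in> ob A" using a by auto
  ultimately show ?thesis using pre unfolding preadditive_def by blast
qed

lemma distr: "f \<in> ar A \<Longrightarrow> f' \<in> ar A \<Longrightarrow> g \<in> ar A \<Longrightarrow> tgt A f = src A g \<Longrightarrow> src A f = src A f' \<Longrightarrow> tgt A f = tgt A f'
  \<Longrightarrow> cmp A g (add A f f') = add A (cmp A g f) (cmp A g f')"
proof -
  assume a: "f \<in> ar A" "f' \<in> ar A" "g \<in> ar A" "tgt A f = src A g" "src A f = src A f'" "tgt A f = tgt A f'"
  have h: "f \<in> hom A (src A f) (tgt A f)" "f' \<in> hom A (src A f) (tgt A f)" "g \<in> hom A (tgt A f) (tgt A g)" using a by (auto simp: hom_def)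
  have o: "src A f \<in> ob A" "tgt A f \<in> ob A" "tgt A g \<in> ob A" using a by auto
  have "\<forall>X\<in>ob A. \<forall>Y\<in>ob A. \<forall>Z\<in>ob A. \<forall>f\<in>hom A X Y. \<forall>f'\<in>hom A X Y. \<forall>g\<in>hom A Y Z.
            cmp A g (add A f f') = add A (cmp A g f) (cmp A g f')" using pre unfolding preadditive_def by (auto simp del: add_ar src_add tgt_add cmp_ar src_cmp tgt_cmp)
  then show ?thesis using h o by blast
qed

lemma idem_zero: "x \<in> ar A \<Longrightarrow> add A x x = x \<Longrightarrow> x = zer A (src A x) (tgt A x)"
proof -
  assume a: "x \<in> ar A" "add A x x = x"
  have "x = add A x (zer A (src A x) (tgt A x))" using a by simp
  also have "\<dots> = add A x (add A x (neg A x))" using a by simp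
  also have "\<dots> = add A (add A x x) (neg A x)" by (rule add_assoc[symmetric]) (use a in auto)
  also have "\<dots> = add A x (neg A x)" by (simp only: a(2))
  also have "\<dots> = zer A (src A x) (tgt A x)" using a by simp
  finally show ?thesis .
qed

lemma cmp_zr[simp]: "g \<in> ar A \<Longrightarrow> X \<in> ob A \<Longrightarrow> Y = src A g \<Longrightarrow> cmp A g (zer A X Y) = zer A X (tgt A g)"
proof -
  assume a: "g \<in> ar A" "X \<in> ob A" "Y = src A g"
  let ?x = "cmp A g (zer A X Y)"
  have "add A ?x ?x = cmp A g (add A (zer A X Y) (zer A X Y))" by (rule distr[symmetric]) (use a in auto)
  also have "\<dots> = ?x" using a by simp
  finally show ?thesis using idem_zero[of ?x] a by simp
qed

lemma cmp_zl[simp]: "f \<in> ar A \<Longrightarrow> Z \<in> ob A \<Longrightarrow> Y = tgt A f \<Longrightarrow> cmp A (zer A Y Z) f = zer A (src A f) Z"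
proof -
  assume a: "f \<in> ar A" "Z \<in> ob A" "Y = tgt A f"
  let ?x = "cmp A (zer A Y Z) f"
  have "add A ?x ?x = cmp A (add A (zer A Y Z) (zer A Y Z)) f" by (rule distl[symmetric]) (use a in auto)
  also have "\<dots> = ?x" using a by simp
  finally show ?thesis using idem_zero[of ?x] a by simp
qed

lemma neg_unique: "a \<in> ar A \<Longrightarrow> b \<in> ar A \<Longrightarrow> src A a = src A b \<Longrightarrow> tgt A a = tgt A b \<Longrightarrow>
  add A a b = zer A (src A a) (tgt A a) \<Longrightarrow> b = neg A a"
proof -
  assume a: "a \<in> ar A" "b \<in> ar A" "src A a = src A b" "tgt A a = tgt A b" "add A a b = zer A (src A a) (tgt A a)"
  have "b = add A b (zer A (src A a) (tgt A a))" using a by simp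
  also have "\<dots> = add A b (add A a (neg A a))" using a by simp
  also have "\<dots> = add A (add A b a) (neg A a)" by (rule add_assoc[symmetric]) (use a in auto)
  also have "\<dots> = add A (add A a b) (neg A a)" using a by (simp add: add_comm[of b a])
  also have "\<dots> = add A (zer A (src A a) (tgt A a)) (neg A a)" by (simp only: a(5))
  also have "\<dots> = neg A a" using a by simp
  finally show ?thesis .
qed

lemma sub_zero_eq: "a \<in> ar A \<Longrightarrow> b \<in> ar A \<Longrightarrow> src A a = src A b \<Longrightarrow> tgt A a = tgt A b \<Longrightarrow>
  add A a (neg A b) = zer A (src A a) (tgt A a) \<Longrightarrow> a = b"
proof -
  assume a: "a \<in> ar A" "b \<in> ar A" "src A a = src A b" "tgt A a = tgt A b" "add A a (neg A b) = zer A (src A a) (tgt A a)"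
  have "a = add A a (zer A (src A a) (tgt A a))" using a by simp
  also have "\<dots> = add A a (add A (neg A b) b)" using a by (simp add: add_comm[of "neg A b" b])
  also have "\<dots> = add A (add A a (neg A b)) b" by (rule add_assoc[symmetric]) (use a in auto)
  also have "\<dots> = add A (zer A (src A a) (tgt A a)) b" by (simp only: a(5))
  also have "\<dots> = b" using a by simp
  finally show ?thesis .
qed

lemma cmp_negr: "f \<in> ar A \<Longrightarrow> g \<in> ar A \<Longrightarrow> tgt A f = src A g \<Longrightarrow> cmp A g (neg A f) = neg A (cmp A g f)"
proof -
  assume a: "f \<in> ar A" "g \<in> ar A" "tgt A f = src A g"
  have "add A (cmp A g f) (cmp A g (neg A f)) = cmp A g (add A f (neg A f))" by (rule distr[symmetric]) (use a in auto)
  also have "\<dots> = zer A (src A f) (tgt A g)" using a by simp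
  finally show ?thesis using a by (intro neg_unique) auto
qed

lemma cmp_negl: "f \<in> ar A \<Longrightarrow> g \<in> ar A \<Longrightarrow> tgt A f = src A g \<Longrightarrow> cmp A (neg A g) f = neg A (cmp A g f)"
proof -
  assume a: "f \<in> ar A" "g \<in> ar A" "tgt A f = src A g"
  have "add A (cmp A g f) (cmp A (neg A g) f) = cmp A (add A g (neg A g)) f" by (rule distl[symmetric]) (use a in auto)
  also have "\<dots> = zer A (src A f) (tgt A g)" using a by simp
  finally show ?thesis using a by (intro neg_unique) auto
qed

lemma neg_zer[simp]: "X \<in> ob A \<Longrightarrow> Y \<in> ob A \<Longrightarrow> neg A (zer A X Y) = zer A X Y"
  by (rule neg_unique[symmetric]) auto


declare assoc[simp]

lemma sec_mono: "is_section A m \<Longrightarrow> mono A m"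
  unfolding is_section_def mono_def
proof (intro conjI ballI impI; (elim conjE bexE)?)
  fix r g h assume a: "m \<in> ar A" "r \<in> hom A (tgt A m) (src A m)" "cmp A r m = idn A (src A m)"
    "g \<in> ar A" "h \<in> ar A" "tgt A g = src A m" "tgt A h = src A m" "src A g = src A h" "cmp A m g = cmp A m h"
  have r: "r \<in> ar A" "src A r = tgt A m" "tgt A r = src A m" using a(2) by (auto simp: hom_def)
  have "g = cmp A (cmp A r m) g" using a by simp
  also have "\<dots> = cmp A r (cmp A m g)" by (rule assoc) (use a r in auto)
  also have "\<dots> = cmp A r (cmp A m h)" by (simp only: a(9))
  also have "\<dots> = cmp A (cmp A r m) h" by (rule assoc[symmetric]) (use a r in auto)
  also have "\<dots> = h" using a by simp
  finally show "g = h" .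
qed (auto simp: is_section_def)

definition gmap where "gmap k t n s = add A (cmp A k t) (neg A (cmp A n (cmp A s (cmp A k t))))"

lemma gmap_ar: assumes "n \<in> ar A" "tgt A n = M" "s \<in> hom A M (src A n)" "k \<in> ar A" "tgt A k = M" "t \<in> hom A M (src A k)"
  shows "gmap k t n s \<in> ar A" "src A (gmap k t n s) = M" "tgt A (gmap k t n s) = M"
  using assms by (auto simp: gmap_def hom_def)

lemma gmap_cmp: assumes "n \<in> ar A" "tgt A n = M" "s \<in> hom A M (src A n)" "k \<in> ar A" "tgt A k = M" "t \<in> hom A M (src A k)"
  and x: "x \<in> ar A" "tgt A x = M"
  shows "cmp A (gmap k t n s) x = add A (cmp A k (cmp A t x)) (neg A (cmp A n (cmp A s (cmp A k (cmp A t x)))))"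
proof -
  have h: "s \<in> ar A" "src A s = M" "tgt A s = src A n" "t \<in> ar A" "src A t = M" "tgt A t = src A k"
    using assms by (auto simp: hom_def)
  show ?thesis unfolding gmap_def using assms h by (simp add: distl cmp_negl)
qed


lemma cancel_left: "t \<in> ar A \<Longrightarrow> k \<in> ar A \<Longrightarrow> tgt A k = src A t \<Longrightarrow> cmp A t k = idn A (src A k) \<Longrightarrow>
   x \<in> ar A \<Longrightarrow> tgt A x = src A k \<Longrightarrow> cmp A t (cmp A k x) = x"
  by (metis assoc idl tgt_ob tgt_cmp src_cmp cmp_ar)

lemma part1:
  assumes kerd: "is_kernel A i d" and M: "tgt A i = M"
  and n: "n \<in> ar A" "tgt A n = M" and s: "s \<in> hom A M (src A n)" "cmp A s n = idn A (src A n)"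
  and u: "u \<in> hom A (src A i) (src A n)" "i = cmp A n u"
  and k: "k \<in> ar A" "tgt A k = M" and t: "t \<in> hom A M (src A k)" "cmp A t k = idn A (src A k)"
  and pb: "is_pullback A k n p1 p2"
  and kap: "is_kernel A \<kappa> (cmp A d (gmap k t n s))"
  shows "cmp A (gmap k t n s) \<kappa> = zer A (src A \<kappa>) M"
    and "\<exists>w\<in>hom A (src A p1) (src A \<kappa>). cmp A \<kappa> w = cmp A k p1"
    and "is_section A \<kappa> \<Longrightarrow> is_section A (cmp A k p1)"
    and "fully_invariant_mono A \<kappa> \<Longrightarrow> fully_invariant_mono A k \<Longrightarrow> is_section A (cmp A k p1) \<Longrightarrow>
         fully_invariant_mono A (cmp A k p1)"
proof -
  define g where "g = gmap k t n s"
  define P where "P = src A p1"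
  define m where "m = cmp A k p1"
  have ih: "i \<in> ar A" "d \<in> ar A" "src A d = M" "cmp A d i = zer A (src A i) (tgt A d)"
    and iu: "\<And>x. x \<in> ar A \<Longrightarrow> tgt A x = M \<Longrightarrow> cmp A d x = zer A (src A x) (tgt A d) \<Longrightarrow>
       \<exists>!v. v \<in> hom A (src A x) (src A i) \<and> cmp A i v = x"
    using kerd M unfolding is_kernel_def by auto
  have sh: "s \<in> ar A" "src A s = M" "tgt A s = src A n" using s by (auto simp: hom_def)
  have th: "t \<in> ar A" "src A t = M" "tgt A t = src A k" using t by (auto simp: hom_def)
  have uh: "u \<in> ar A" "src A u = src A i" "tgt A u = src A n" using u by (auto simp: hom_def)
  have ph: "p1 \<in> ar A" "src A p1 = P" "tgt A p1 = src A k" "p2 \<in> ar A" "src A p2 = P" "tgt A p2 = src A n"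
    and pheq: "cmp A k p1 = cmp A n p2"
    using pb unfolding is_pullback_def hom_def P_def by auto
  have pu: "\<And>a b. a \<in> ar A \<Longrightarrow> b \<in> ar A \<Longrightarrow> tgt A a = src A k \<Longrightarrow> tgt A b = src A n \<Longrightarrow> src A a = src A b \<Longrightarrow>
        cmp A k a = cmp A n b \<Longrightarrow> (\<exists>!u. u \<in> hom A (src A a) P \<and> cmp A p1 u = a \<and> cmp A p2 u = b)"
    using pb unfolding is_pullback_def P_def by blast
  have g: "g \<in> ar A" "src A g = M" "tgt A g = M" using gmap_ar[OF n s(1) k t(1)] g_def by auto
  have gc: "\<And>x. x \<in> ar A \<Longrightarrow> tgt A x = M \<Longrightarrow>
     cmp A g x = add A (cmp A k (cmp A t x)) (neg A (cmp A n (cmp A s (cmp A k (cmp A t x)))))"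
    using gmap_cmp[OF n s(1) k t(1)] g_def by auto
  have tk: "\<And>x. x \<in> ar A \<Longrightarrow> tgt A x = src A k \<Longrightarrow> cmp A t (cmp A k x) = x"
    using cancel_left th k t(2) by auto
  have sn: "\<And>x. x \<in> ar A \<Longrightarrow> tgt A x = src A n \<Longrightarrow> cmp A s (cmp A n x) = x"
    using cancel_left sh n s(2) by auto
  have mh: "m \<in> ar A" "src A m = P" "tgt A m = M" using ph k unfolding m_def by auto
  have obs: "P \<in> ob A" "M \<in> ob A" using ph(1,2) k(1,2) src_ob tgt_ob by blast+
  have sdg: "src A (cmp A d g) = M" "tgt A (cmp A d g) = tgt A d" "cmp A d g \<in> ar A" using g ih by auto
  have kk: "is_kernel A \<kappa> (cmp A d g)" using kap g_def by simp
  have kap0: "\<kappa> \<in> ar A" "tgt A \<kappa> = M" "cmp A (cmp A d g) \<kappa> = zer A (src A \<kappa>) (tgt A d)"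
    using kk unfolding is_kernel_def sdg by (simp_all only: simp_thms)
  have kap1: "\<kappa> \<in> ar A" "tgt A \<kappa> = M" "cmp A d (cmp A g \<kappa>) = zer A (src A \<kappa>) (tgt A d)"
    using kap0 g ih by (simp_all del: assoc add: assoc[symmetric])
  have kapu: "\<exists>!v. v \<in> hom A (src A x) (src A \<kappa>) \<and> cmp A \<kappa> v = x"
    if "x \<in> ar A" "tgt A x = M" "cmp A d (cmp A g x) = zer A (src A x) (tgt A d)" for x
  proof -
    have "cmp A (cmp A d g) x = cmp A d (cmp A g x)" using that g ih by (simp del: assoc add: assoc)
    then have a1: "tgt A x = src A (cmp A d g)" "cmp A (cmp A d g) x = zer A (src A x) (tgt A (cmp A d g))"
      using that sdg by auto
    show ?thesis using kk that(1) a1 unfolding is_kernel_def by blast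
  qed
  have ktm: "cmp A k (cmp A t m) = m" unfolding m_def using tk ph by simp
  have nsm: "cmp A n (cmp A s m) = m" unfolding m_def using sn ph pheq by simp
  have gm: "cmp A g m = zer A P M" using gc[of m] mh ktm nsm by simp
  have "cmp A d (cmp A g m) = zer A (src A m) (tgt A d)" using gm mh ih obs by simp
  then obtain w where w: "w \<in> hom A P (src A \<kappa>)" "cmp A \<kappa> w = m" using kapu[of m] mh by auto
  then show "\<exists>w\<in>hom A (src A p1) (src A \<kappa>). cmp A \<kappa> w = cmp A k p1" unfolding P_def m_def by auto
  have wh: "w \<in> ar A" "src A w = P" "tgt A w = src A \<kappa>" using w by (auto simp: hom_def)
  obtain v where v: "v \<in> hom A (src A \<kappa>) (src A i)" "cmp A i v = cmp A g \<kappa>"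
    using ih(3) iu[of "cmp A g \<kappa>"] kap1 g by auto
  have vh: "v \<in> ar A" "src A v = src A \<kappa>" "tgt A v = src A i" using v by (auto simp: hom_def)
  define y where "y = cmp A s (cmp A k (cmp A t \<kappa>))"
  have yh: "y \<in> ar A" "src A y = src A \<kappa>" "tgt A y = src A n" unfolding y_def using sh th k kap1 by auto
  have "cmp A s (cmp A g \<kappa>) = cmp A s (add A (cmp A k (cmp A t \<kappa>)) (neg A (cmp A n y)))"
    using gc kap1 y_def by simp
  also have "\<dots> = add A y (neg A (cmp A s (cmp A n y)))" unfolding y_def using sh th k n kap1
    by (simp add: distr cmp_negr)
  also have "\<dots> = zer A (src A \<kappa>) (src A n)" using sn yh by simp
  finally have sg: "cmp A s (cmp A g \<kappa>) = zer A (src A \<kappa>) (src A n)" .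
  have iv: "cmp A g \<kappa> = cmp A n (cmp A u v)"
  proof -
    have "cmp A g \<kappa> = cmp A i v" using v(2) by simp
    also have "\<dots> = cmp A (cmp A n u) v" using u(2) by simp
    also have "\<dots> = cmp A n (cmp A u v)" by (rule assoc) (use uh vh n in auto)
    finally show ?thesis .
  qed
  have "cmp A s (cmp A g \<kappa>) = cmp A s (cmp A n (cmp A u v))" using iv by simp
  also have "\<dots> = cmp A u v" using sn uh vh by simp
  finally have uv: "cmp A u v = zer A (src A \<kappa>) (src A n)" using sg by simp
  have gk: "cmp A g \<kappa> = zer A (src A \<kappa>) M"
  proof -
    have "cmp A g \<kappa> = cmp A n (cmp A u v)" by (rule iv)
    also have "\<dots> = zer A (src A \<kappa>) M" using uv n kap1 by simp
    finally show ?thesis .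
  qed
  then show "cmp A (gmap k t n s) \<kappa> = zer A (src A \<kappa>) M" using g_def by simp
  have kty: "cmp A k (cmp A t \<kappa>) = cmp A n y"
  proof (rule sub_zero_eq)
    show "add A (cmp A k (cmp A t \<kappa>)) (neg A (cmp A n y)) = zer A (src A (cmp A k (cmp A t \<kappa>))) (tgt A (cmp A k (cmp A t \<kappa>)))"
      using gk gc[of \<kappa>] kap1 th k y_def by simp
  qed (use yh th k kap1 n in auto)
  show sect: "is_section A (cmp A k p1)" if sec: "is_section A \<kappa>"
  proof -
    obtain \<rho> where \<rho>: "\<rho> \<in> hom A M (src A \<kappa>)" "cmp A \<rho> \<kappa> = idn A (src A \<kappa>)"
      using sec kap1 unfolding is_section_def by auto
    have \<rho>h: "\<rho> \<in> ar A" "src A \<rho> = M" "tgt A \<rho> = src A \<kappa>" using \<rho> by (auto simp: hom_def)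
    obtain z where z: "z \<in> hom A (src A \<kappa>) P" "cmp A p1 z = cmp A t \<kappa>" "cmp A p2 z = y"
      using pu[of "cmp A t \<kappa>" y] th kap1 yh kty by auto
    have zh: "z \<in> ar A" "src A z = src A \<kappa>" "tgt A z = P" using z by (auto simp: hom_def)
    have uq: "\<exists>!u. u \<in> hom A P P \<and> cmp A p1 u = p1 \<and> cmp A p2 u = p2"
      using pu[of p1 p2] ph pheq by auto
    have c1: "cmp A p1 (cmp A z w) = p1"
    proof -
      have "cmp A p1 (cmp A z w) = cmp A (cmp A p1 z) w" using ph zh wh by simp
      also have "\<dots> = cmp A t m" using z(2) w(2) th kap1 wh by simp
      also have "\<dots> = p1" using ktm tk ph unfolding m_def by simp
      finally show ?thesis .
    qed
    have c2: "cmp A p2 (cmp A z w) = p2"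
    proof -
      have "cmp A p2 (cmp A z w) = cmp A (cmp A p2 z) w" using ph zh wh by simp
      also have "\<dots> = cmp A s (cmp A k (cmp A t m))" using z(3) w(2) th kap1 wh y_def sh k by simp
      also have "\<dots> = cmp A s m" unfolding m_def using tk ph by simp
      also have "\<dots> = p2" unfolding m_def using sn ph pheq by simp
      finally show ?thesis .
    qed
    have "cmp A z w \<in> hom A P P" using zh wh by (auto simp: hom_def)
    moreover have "idn A P \<in> hom A P P" "cmp A p1 (idn A P) = p1" "cmp A p2 (idn A P) = p2"
      using ph mh by (auto simp: hom_def)
    ultimately have zw: "cmp A z w = idn A P" using uq c1 c2 by blast
    have "cmp A (cmp A z \<rho>) m = cmp A z (cmp A \<rho> (cmp A \<kappa> w))" using zh \<rho>h mh w(2) by simp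
    also have "\<dots> = cmp A z w" using \<rho>(2) kap1 wh \<rho>h by (simp flip: assoc)
    finally have "cmp A (cmp A z \<rho>) m = idn A (src A m)" using zw mh by simp
    moreover have "cmp A z \<rho> \<in> hom A (tgt A m) (src A m)" using zh \<rho>h mh by (auto simp: hom_def)
    ultimately show ?thesis using mh unfolding is_section_def m_def by auto
  qed
  show "fully_invariant_mono A (cmp A k p1)"
    if fk: "fully_invariant_mono A \<kappa>" and fkk: "fully_invariant_mono A k" and sc: "is_section A (cmp A k p1)"
  proof -
    have "\<exists>\<alpha>\<in>hom A P P. cmp A h m = cmp A m \<alpha>" if h: "h \<in> hom A M M" for h
    proof -
      have hh: "h \<in> ar A" "src A h = M" "tgt A h = M" using h by (auto simp: hom_def)
      obtain \<beta> where \<beta>: "\<beta> \<in> hom A (src A \<kappa>) (src A \<kappa>)" "cmp A h \<kappa> = cmp A \<kappa> \<beta>"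
        using fk h kap1 unfolding fully_invariant_mono_def by auto
      obtain \<gamma> where \<gamma>: "\<gamma> \<in> hom A (src A k) (src A k)" "cmp A h k = cmp A k \<gamma>"
        using fkk h k unfolding fully_invariant_mono_def by auto
      have \<beta>h: "\<beta> \<in> ar A" "src A \<beta> = src A \<kappa>" "tgt A \<beta> = src A \<kappa>" using \<beta> by (auto simp: hom_def)
      have \<gamma>h: "\<gamma> \<in> ar A" "src A \<gamma> = src A k" "tgt A \<gamma> = src A k" using \<gamma> by (auto simp: hom_def)
      define yy where "yy = cmp A h m"
      have yyh: "yy \<in> ar A" "src A yy = P" "tgt A yy = M" using hh mh yy_def by auto
      have y1: "yy = cmp A \<kappa> (cmp A \<beta> w)"
      proof -
        have "yy = cmp A h (cmp A \<kappa> w)" using w(2) yy_def by simp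
        also have "\<dots> = cmp A (cmp A h \<kappa>) w" using hh kap1 wh by simp
        also have "\<dots> = cmp A \<kappa> (cmp A \<beta> w)" using \<beta>(2) \<beta>h kap1 wh by simp
        finally show ?thesis .
      qed
      have y2: "yy = cmp A k (cmp A \<gamma> p1)"
      proof -
        have "yy = cmp A (cmp A h k) p1" using yy_def m_def hh k ph by simp
        also have "\<dots> = cmp A k (cmp A \<gamma> p1)" using \<gamma>(2) \<gamma>h k ph by simp
        finally show ?thesis .
      qed
      have "cmp A g yy = cmp A (cmp A g \<kappa>) (cmp A \<beta> w)" using y1 g kap1 \<beta>h wh by simp
      also have "\<dots> = zer A P M" using gk \<beta>h wh kap1 obs by simp
      finally have gy: "cmp A g yy = zer A P M" .
      have kty2: "cmp A k (cmp A t yy) = yy" using y2 tk \<gamma>h ph by simp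
      have yns: "yy = cmp A n (cmp A s yy)"
      proof (rule sub_zero_eq)
        show "add A yy (neg A (cmp A n (cmp A s yy))) = zer A (src A yy) (tgt A yy)"
          using gy gc[of yy] yyh kty2 by simp
      qed (use yyh sh n in auto)
      obtain \<alpha> where \<alpha>: "\<alpha> \<in> hom A P P" "cmp A p1 \<alpha> = cmp A \<gamma> p1" "cmp A p2 \<alpha> = cmp A s yy"
      proof -
        have kg: "cmp A k (cmp A \<gamma> p1) = cmp A n (cmp A s yy)" using y2 yns by metis
        have "\<exists>!u. u \<in> hom A (src A (cmp A \<gamma> p1)) P \<and> cmp A p1 u = cmp A \<gamma> p1 \<and> cmp A p2 u = cmp A s yy"
          by (rule pu) (use \<gamma>h ph yyh sh kg in auto)
        then show ?thesis using that \<gamma>h ph by auto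
      qed
      have \<alpha>h: "\<alpha> \<in> ar A" "src A \<alpha> = P" "tgt A \<alpha> = P" using \<alpha> by (auto simp: hom_def)
      have "cmp A m \<alpha> = cmp A k (cmp A p1 \<alpha>)" using m_def k ph \<alpha>h by simp
      also have "\<dots> = cmp A h m" using \<alpha>(2) y2 yy_def by metis
      finally show ?thesis using \<alpha>(1) by (metis)
    qed
    then show ?thesis using sec_mono[OF sc] mh unfolding fully_invariant_mono_def m_def P_def by auto
  qed
qed


lemma add_sub_cancel: "a \<in> ar A \<Longrightarrow> b \<in> ar A \<Longrightarrow> src A a = src A b \<Longrightarrow> tgt A a = tgt A b \<Longrightarrow>
  add A a (add A b (neg A a)) = b"
proof -
  assume a: "a \<in> ar A" "b \<in> ar A" "src A a = src A b" "tgt A a = tgt A b"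
  have "add A a (add A b (neg A a)) = add A a (add A (neg A a) b)" using a by (simp add: add_comm[of b "neg A a"])
  also have "\<dots> = add A (add A a (neg A a)) b" by (rule add_assoc[symmetric]) (use a in auto)
  also have "\<dots> = b" using a by simp
  finally show ?thesis .
qed

lemma cmp_zer_l2: "f \<in> ar A \<Longrightarrow> g \<in> ar A \<Longrightarrow> tgt A f = src A g \<Longrightarrow> cmp A g f = zer A (src A f) (tgt A g) \<Longrightarrow>
  x \<in> ar A \<Longrightarrow> tgt A x = src A f \<Longrightarrow> cmp A g (cmp A f x) = zer A (src A x) (tgt A g)"
  by (metis assoc cmp_zl src_ob tgt_ob)

lemma part2:
  assumes n: "n \<in> ar A" "tgt A n = M" and s: "s \<in> hom A M (src A n)" "cmp A s n = idn A (src A n)"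
  and i: "i \<in> ar A" "tgt A i = M"
  and u: "u \<in> hom A (src A n) (src A i)" "n = cmp A i u"
  and k: "k \<in> ar A" "tgt A k = M" and t: "t \<in> hom A M (src A k)" "cmp A t k = idn A (src A k)"
  and sm: "is_sum A k n m"
  and cok: "is_cokernel A c (cmp A (gmap n s k t) i)"
  and ret: "is_retraction A c"
  shows "is_section A m"
    and "fully_coinvariant_epi A c \<Longrightarrow> fully_invariant_mono A k \<Longrightarrow> fully_invariant_mono A m"
proof -
  define g where "g = gmap n s k t"
  define K where "K = src A k"
  define N where "N = src A n"
  obtain P p1 p2 j1 j2 e where bp: "is_biproduct A K N P p1 p2 j1 j2" and mm: "mono A m" and tm: "tgt A m = M"
    and ep: "epi A e" and eh: "e \<in> hom A P (src A m)" and me: "cmp A m e = add A (cmp A k p1) (cmp A n p2)"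
    using sm k unfolding is_sum_def K_def N_def by auto
  define S where "S = src A m"
  have mh: "m \<in> ar A" "src A m = S" "tgt A m = M" using mm tm S_def unfolding mono_def by auto
  have sh: "s \<in> ar A" "src A s = M" "tgt A s = N" using s N_def by (auto simp: hom_def)
  have th: "t \<in> ar A" "src A t = M" "tgt A t = K" using t K_def by (auto simp: hom_def)
  have uh: "u \<in> ar A" "src A u = N" "tgt A u = src A i" using u N_def by (auto simp: hom_def)
  have nh: "src A n = N" and kh: "src A k = K" using N_def K_def by auto
  have bph: "p1 \<in> ar A" "src A p1 = P" "tgt A p1 = K" "p2 \<in> ar A" "src A p2 = P" "tgt A p2 = N"
     "j1 \<in> ar A" "src A j1 = K" "tgt A j1 = P" "j2 \<in> ar A" "src A j2 = N" "tgt A j2 = P" "P \<in> ob A"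
    using bp unfolding is_biproduct_def hom_def by auto
  have bpe: "cmp A p1 j1 = idn A K" "cmp A p2 j2 = idn A N" "cmp A p1 j2 = zer A N K" "cmp A p2 j1 = zer A K N"
    using bp unfolding is_biproduct_def by auto
  have eh2: "e \<in> ar A" "src A e = P" "tgt A e = S" using eh S_def by (auto simp: hom_def)
  have epi_e: "\<And>a b. a \<in> ar A \<Longrightarrow> b \<in> ar A \<Longrightarrow> src A a = S \<Longrightarrow> src A b = S \<Longrightarrow> tgt A a = tgt A b \<Longrightarrow>
      cmp A a e = cmp A b e \<Longrightarrow> a = b"
    using ep eh2 unfolding epi_def by auto
  have mono_m: "\<And>a b. a \<in> ar A \<Longrightarrow> b \<in> ar A \<Longrightarrow> tgt A a = S \<Longrightarrow> tgt A b = S \<Longrightarrow> src A a = src A b \<Longrightarrow>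
      cmp A m a = cmp A m b \<Longrightarrow> a = b"
    using mm mh unfolding mono_def by auto
  have obs: "M \<in> ob A" "K \<in> ob A" "N \<in> ob A" "S \<in> ob A" using k n mh K_def N_def by auto
  have g: "g \<in> ar A" "src A g = M" "tgt A g = M" using gmap_ar[OF k t(1) n s(1)] g_def by auto
  have gc: "\<And>x. x \<in> ar A \<Longrightarrow> tgt A x = M \<Longrightarrow>
     cmp A g x = add A (cmp A n (cmp A s x)) (neg A (cmp A k (cmp A t (cmp A n (cmp A s x)))))"
    using gmap_cmp[OF k t(1) n s(1)] g_def by auto
  have sn: "\<And>x. x \<in> ar A \<Longrightarrow> tgt A x = N \<Longrightarrow> cmp A s (cmp A n x) = x"
    using cancel_left sh n s(2) N_def by auto
  obtain f where fk: "is_kernel A m f" using mm abel unfolding abelian_def by blast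
  define Y where "Y = tgt A f"
  have fh: "f \<in> ar A" "src A f = M" "tgt A f = Y" "cmp A f m = zer A S Y"
    using fk mh Y_def unfolding is_kernel_def by auto
  have fu: "\<And>x. x \<in> ar A \<Longrightarrow> tgt A x = M \<Longrightarrow> cmp A f x = zer A (src A x) Y \<Longrightarrow>
       \<exists>!v. v \<in> hom A (src A x) S \<and> cmp A m v = x"
    using fk mh Y_def unfolding is_kernel_def by auto
  have Yob: "Y \<in> ob A" using fh by auto
  have fme: "add A (cmp A f (cmp A k p1)) (cmp A f (cmp A n p2)) = zer A P Y"
  proof -
    have "add A (cmp A f (cmp A k p1)) (cmp A f (cmp A n p2)) = cmp A f (cmp A m e)"
      using me fh k n bph kh nh by (simp add: distr)
    also have "\<dots> = zer A P Y" using cmp_zer_l2[of m f e] fh mh eh2 by simp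
    finally show ?thesis .
  qed
  have fkz0: "cmp A f k = zer A K Y"
  proof -
    have "cmp A (add A (cmp A f (cmp A k p1)) (cmp A f (cmp A n p2))) j1 = cmp A (zer A P Y) j1" using fme by simp
    then show ?thesis using fh k n bph bpe kh nh obs Yob by (simp add: distl)
  qed
  have fnz0: "cmp A f n = zer A N Y"
  proof -
    have "cmp A (add A (cmp A f (cmp A k p1)) (cmp A f (cmp A n p2))) j2 = cmp A (zer A P Y) j2" using fme by simp
    then show ?thesis using fh k n bph bpe kh nh obs Yob by (simp add: distl)
  qed
  have fkz: "\<And>x. x \<in> ar A \<Longrightarrow> tgt A x = K \<Longrightarrow> cmp A f (cmp A k x) = zer A (src A x) Y"
    using cmp_zer_l2[of k f] fkz0 fh k kh by auto
  have fnz: "\<And>x. x \<in> ar A \<Longrightarrow> tgt A x = N \<Longrightarrow> cmp A f (cmp A n x) = zer A (src A x) Y"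
    using cmp_zer_l2[of n f] fnz0 fh n nh by auto
  define gi where "gi = cmp A g i"
  have gih: "gi \<in> ar A" "src A gi = src A i" "tgt A gi = M" using g i gi_def by auto
  define Q where "Q = tgt A c"
  have ch: "c \<in> ar A" "src A c = M" "tgt A c = Q" "cmp A c gi = zer A (src A i) Q"
    using cok gih Q_def unfolding is_cokernel_def g_def gi_def by auto
  have cu: "\<And>x. x \<in> ar A \<Longrightarrow> src A x = M \<Longrightarrow> cmp A x gi = zer A (src A i) (tgt A x) \<Longrightarrow>
       \<exists>!v. v \<in> hom A Q (tgt A x) \<and> cmp A v c = x"
    using cok gih Q_def unfolding is_cokernel_def g_def gi_def by auto
  have Qob: "Q \<in> ob A" using ch by auto
  have fgi: "cmp A f gi = zer A (src A i) Y"
  proof -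
    have "cmp A f gi = cmp A f (cmp A g i)" using gi_def by simp
    also have "\<dots> = add A (cmp A f (cmp A n (cmp A s i))) (neg A (cmp A f (cmp A k (cmp A t (cmp A n (cmp A s i))))))"
      using gc[of i] i fh sh th n k kh nh by (simp add: distr cmp_negr)
    also have "\<dots> = zer A (src A i) Y" using fnz fkz i sh th n k kh nh Yob by simp
    finally show ?thesis .
  qed
  obtain f' where f': "f' \<in> hom A Q Y" "cmp A f' c = f" using cu[of f] fh fgi by auto
  have f'h: "f' \<in> ar A" "src A f' = Q" "tgt A f' = Y" using f' by (auto simp: hom_def)
  obtain \<sigma> where \<sigma>: "\<sigma> \<in> hom A Q M" "cmp A c \<sigma> = idn A Q"
    using ret ch unfolding is_retraction_def by auto
  have \<sigma>h: "\<sigma> \<in> ar A" "src A \<sigma> = Q" "tgt A \<sigma> = M" using \<sigma> by (auto simp: hom_def)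
  have csc: "\<And>x. x \<in> ar A \<Longrightarrow> tgt A x = Q \<Longrightarrow> cmp A c (cmp A \<sigma> x) = x"
    using cancel_left ch \<sigma>h \<sigma>(2) by auto
  define \<pi> where "\<pi> = add A (idn A M) (neg A (cmp A \<sigma> c))"
  define \<omega> where "\<omega> = add A (idn A M) (neg A (cmp A k t))"
  define \<phi> where "\<phi> = add A (cmp A k t) (cmp A \<pi> \<omega>)"
  have \<pi>h: "\<pi> \<in> ar A" "src A \<pi> = M" "tgt A \<pi> = M" unfolding \<pi>_def using ch \<sigma>h obs by auto
  have \<omega>h: "\<omega> \<in> ar A" "src A \<omega> = M" "tgt A \<omega> = M" unfolding \<omega>_def using k th obs kh by auto
  have \<phi>h: "\<phi> \<in> ar A" "src A \<phi> = M" "tgt A \<phi> = M" unfolding \<phi>_def using k th kh \<pi>h \<omega>h by auto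
  have \<pi>x: "\<And>x. x \<in> ar A \<Longrightarrow> tgt A x = M \<Longrightarrow> cmp A \<pi> x = add A x (neg A (cmp A \<sigma> (cmp A c x)))"
    unfolding \<pi>_def using ch \<sigma>h obs by (simp add: distl cmp_negl)
  have \<omega>x: "\<And>x. x \<in> ar A \<Longrightarrow> tgt A x = M \<Longrightarrow> cmp A \<omega> x = add A x (neg A (cmp A k (cmp A t x)))"
    unfolding \<omega>_def using k th kh obs by (simp add: distl cmp_negl)
  have \<phi>x: "\<And>x. x \<in> ar A \<Longrightarrow> tgt A x = M \<Longrightarrow> cmp A \<phi> x = add A (cmp A k (cmp A t x)) (cmp A \<pi> (cmp A \<omega> x))"
    unfolding \<phi>_def using k th kh \<pi>h \<omega>h by (simp add: distl)
  have fsc: "cmp A f (cmp A \<sigma> c) = f"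
  proof -
    have "cmp A f (cmp A \<sigma> c) = cmp A (cmp A f' c) (cmp A \<sigma> c)" using f'(2) by simp
    also have "\<dots> = cmp A f' (cmp A c (cmp A \<sigma> c))" using f'h ch \<sigma>h by simp
    also have "\<dots> = cmp A f' c" using csc ch by simp
    finally show ?thesis using f'(2) by simp
  qed
  have f\<pi>: "cmp A f \<pi> = zer A M Y"
  proof -
    have "cmp A f \<pi> = add A f (neg A (cmp A f (cmp A \<sigma> c)))"
      unfolding \<pi>_def using fh ch \<sigma>h obs by (simp add: distr cmp_negr)
    then show ?thesis using fsc fh by simp
  qed
  have f\<phi>: "cmp A f \<phi> = zer A M Y"
  proof -
    have "cmp A f \<phi> = add A (cmp A f (cmp A k t)) (cmp A f (cmp A \<pi> \<omega>))"
      unfolding \<phi>_def using fh k th kh \<pi>h \<omega>h by (simp add: distr)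
    also have "cmp A f (cmp A \<pi> \<omega>) = zer A M Y" using cmp_zer_l2[of \<pi> f \<omega>] f\<pi> fh \<pi>h \<omega>h by simp
    also have "cmp A f (cmp A k t) = zer A M Y" using fkz th by simp
    finally show ?thesis using obs Yob by simp
  qed
  obtain \<psi> where \<psi>: "\<psi> \<in> hom A M S" "cmp A m \<psi> = \<phi>" using fu[of \<phi>] \<phi>h f\<phi> by auto
  have \<psi>h: "\<psi> \<in> ar A" "src A \<psi> = M" "tgt A \<psi> = S" using \<psi> by (auto simp: hom_def)
  have \<phi>k: "cmp A \<phi> k = k"
  proof -
    have tk: "cmp A t k = idn A K" using t(2) kh by simp
    have "cmp A \<omega> k = zer A K M" using \<omega>x[of k] k tk kh by simp
    then show ?thesis using \<phi>x[of k] k tk kh \<pi>h obs by simp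
  qed
  have gin: "cmp A g (cmp A i u) = cmp A \<omega> n"
    using gc[of n] \<omega>x[of n] u(2) n s(2) nh by simp
  have cgiu: "cmp A c (cmp A \<omega> n) = zer A N Q"
  proof -
    have "cmp A c (cmp A \<omega> n) = cmp A c (cmp A gi u)" using gin gi_def g i uh by simp
    also have "\<dots> = cmp A (cmp A c gi) u" by (rule assoc[symmetric]) (use ch gih uh in auto)
    also have "\<dots> = zer A N Q" using ch(4) uh Qob by simp
    finally show ?thesis .
  qed
  have \<omega>nh: "cmp A \<omega> n \<in> ar A" "src A (cmp A \<omega> n) = N" "tgt A (cmp A \<omega> n) = M" using \<omega>h n nh by auto
  have \<phi>n: "cmp A \<phi> n = n"
  proof -
    have "cmp A \<pi> (cmp A \<omega> n) = cmp A \<omega> n" using \<pi>x[of "cmp A \<omega> n"] \<omega>nh cgiu \<sigma>h obs by simp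
    then have "cmp A \<phi> n = add A (cmp A k (cmp A t n)) (cmp A \<omega> n)" using \<phi>x[of n] n by simp
    also have "\<dots> = n" using \<omega>x[of n] n k th kh nh add_sub_cancel by simp
    finally show ?thesis .
  qed
  have \<phi>m: "cmp A \<phi> m = m"
  proof (rule epi_e)
    have "cmp A (cmp A \<phi> m) e = cmp A \<phi> (cmp A m e)" using \<phi>h mh eh2 by simp
    also have "\<dots> = add A (cmp A (cmp A \<phi> k) p1) (cmp A (cmp A \<phi> n) p2)" 
      using me \<phi>h k n bph kh nh by (simp add: distr del: assoc add: assoc[symmetric])
    also have "\<dots> = cmp A m e" using \<phi>k \<phi>n me by simp
    finally show "cmp A (cmp A \<phi> m) e = cmp A m e" .
  qed (use \<phi>h mh in auto)
  have \<psi>m: "cmp A \<psi> m = idn A S"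
  proof (rule mono_m)
    have "cmp A m (cmp A \<psi> m) = cmp A (cmp A m \<psi>) m" using mh \<psi>h by simp
    also have "\<dots> = m" using \<psi>(2) \<phi>m by simp
    finally show "cmp A m (cmp A \<psi> m) = cmp A m (idn A S)" using mh by simp
  qed (use \<psi>h mh obs in auto)
  show sec: "is_section A m" unfolding is_section_def using \<psi>m \<psi> mh by auto
  show "fully_invariant_mono A m" if fce: "fully_coinvariant_epi A c" and fik: "fully_invariant_mono A k"
  proof -
    have "\<exists>\<alpha>\<in>hom A S S. cmp A h m = cmp A m \<alpha>" if h: "h \<in> hom A M M" for h
    proof -
      have hh: "h \<in> ar A" "src A h = M" "tgt A h = M" using h by (auto simp: hom_def)
      obtain \<beta> where \<beta>: "\<beta> \<in> hom A Q Q" "cmp A c h = cmp A \<beta> c"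
        using fce h ch unfolding fully_coinvariant_epi_def by auto
      obtain \<gamma> where \<gamma>: "\<gamma> \<in> hom A K K" "cmp A h k = cmp A k \<gamma>"
        using fik h k kh unfolding fully_invariant_mono_def by auto
      have \<beta>h: "\<beta> \<in> ar A" "src A \<beta> = Q" "tgt A \<beta> = Q" using \<beta> by (auto simp: hom_def)
      have \<gamma>h: "\<gamma> \<in> ar A" "src A \<gamma> = K" "tgt A \<gamma> = K" using \<gamma> by (auto simp: hom_def)
      have fhk: "\<And>x. x \<in> ar A \<Longrightarrow> tgt A x = K \<Longrightarrow> cmp A f (cmp A h (cmp A k x)) = zer A (src A x) Y"
      proof -
        fix x assume x: "x \<in> ar A" "tgt A x = K"
        have "cmp A h (cmp A k x) = cmp A k (cmp A \<gamma> x)" using \<gamma>(2) hh k kh x \<gamma>h by (simp flip: assoc)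
        then show "cmp A f (cmp A h (cmp A k x)) = zer A (src A x) Y" using fkz \<gamma>h x by simp
      qed
      have fhw: "cmp A f (cmp A h (cmp A \<omega> n)) = zer A N Y"
      proof -
        have "cmp A f (cmp A h (cmp A \<omega> n)) = cmp A (cmp A f' c) (cmp A h (cmp A \<omega> n))"
          using f'(2) by simp
        also have "\<dots> = cmp A f' (cmp A c (cmp A h (cmp A \<omega> n)))" using f'h ch hh \<omega>nh by simp
        also have "\<dots> = cmp A f' (cmp A (cmp A c h) (cmp A \<omega> n))"
          using assoc[of "cmp A \<omega> n" h c] ch hh \<omega>nh by simp
        also have "\<dots> = cmp A f' (cmp A (cmp A \<beta> c) (cmp A \<omega> n))" using \<beta>(2) by simp
        also have "\<dots> = cmp A f' (cmp A \<beta> (cmp A c (cmp A \<omega> n)))" using ch \<beta>h \<omega>nh by simp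
        also have "\<dots> = zer A N Y" using cgiu f'h \<beta>h obs Qob by simp
        finally show ?thesis .
      qed
      have nsplit: "n = add A (cmp A k (cmp A t n)) (cmp A \<omega> n)"
        using \<omega>x[of n] n k th kh nh add_sub_cancel by simp
      have fhn: "cmp A f (cmp A h n) = zer A N Y"
      proof -
        have "cmp A f (cmp A h n) = cmp A f (cmp A h (add A (cmp A k (cmp A t n)) (cmp A \<omega> n)))"
          using nsplit by simp
        also have "\<dots> = add A (cmp A f (cmp A h (cmp A k (cmp A t n)))) (cmp A f (cmp A h (cmp A \<omega> n)))"
          using fh hh k th kh n nh \<omega>nh by (simp add: distr del: assoc)
        also have "\<dots> = zer A N Y" using fhk[of "cmp A t n"] fhw th n nh obs Yob by simp
        finally show ?thesis .
      qed
      have fhm: "cmp A f (cmp A h m) = zer A S Y"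
      proof (rule epi_e)
        have "cmp A (cmp A f (cmp A h m)) e = cmp A f (cmp A h (cmp A m e))" using fh hh mh eh2 by simp
        also have "\<dots> = add A (cmp A f (cmp A h (cmp A k p1))) (cmp A f (cmp A h (cmp A n p2)))"
          using me fh hh k n bph kh nh by (simp add: distr)
        also have "cmp A f (cmp A h (cmp A n p2)) = zer A P Y"
          using cmp_zer_l2[of n "cmp A f h" p2] fhn fh hh n nh bph by (simp del: assoc add: assoc[symmetric])
        also have "cmp A f (cmp A h (cmp A k p1)) = zer A P Y" using fhk[of p1] bph by simp
        also have "add A (zer A P Y) (zer A P Y) = cmp A (zer A S Y) e" using bph Yob obs eh2 by simp
        finally show "cmp A (cmp A f (cmp A h m)) e = cmp A (zer A S Y) e" .
      qed (use fh hh mh obs Yob in auto)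
      obtain \<alpha> where \<alpha>: "\<alpha> \<in> hom A S S" "cmp A m \<alpha> = cmp A h m"
        using fu[of "cmp A h m"] hh mh fhm by auto
      then show ?thesis by metis
    qed
    then show ?thesis using mm mh unfolding fully_invariant_mono_def by auto
  qed
qed


lemma ker_ex: "f \<in> ar A \<Longrightarrow> \<exists>k. is_kernel A k f" using abel unfolding abelian_def by blast
lemma coker_ex: "f \<in> ar A \<Longrightarrow> \<exists>k. is_cokernel A k f" using abel unfolding abelian_def by blast

end

theorem proposition3p6:
  fixes A :: "('o, 'm) acat" and i d :: 'm
  assumes "abelian A"
    and "short_exact A i d"
    and "fully_invariant_mono A i"
  shows
   "(M_F_split A (tgt A i) i d \<longrightarrow>
       (\<forall>n k m. direct_summand A n (tgt A i) \<and> subobj_le A i n \<and>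
          direct_summand A k (tgt A i) \<and> is_intersection A k n m
          \<longrightarrow> direct_summand A m (tgt A i))) \<and>
    (strongly_M_F_split A (tgt A i) i d \<longrightarrow>
       (\<forall>n k m. direct_summand A n (tgt A i) \<and> subobj_le A i n \<and>
          fi_direct_summand A k (tgt A i) \<and> is_intersection A k n m
          \<longrightarrow> fi_direct_summand A m (tgt A i))) \<and>
    (dual_M_F_split A (tgt A i) i d \<longrightarrow>
       (\<forall>n k m. direct_summand A n (tgt A i) \<and> subobj_le A n i \<and>
          direct_summand A k (tgt A i) \<and> is_sum A k n m
          \<longrightarrow> direct_summand A m (tgt A i))) \<and>
    (dual_strongly_M_F_split A (tgt A i) i d \<longrightarrow>
       (\<forall>n k m. direct_summand A n (tgt A i) \<and> subobj_le A n i \<and>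
          fi_direct_summand A k (tgt A i) \<and> is_sum A k n m
          \<longrightarrow> fi_direct_summand A m (tgt A i)))"
proof -
  interpret abc A using assms(1) by unfold_locales
  define M where "M = tgt A i"
  have kerd: "is_kernel A i d" and im: "mono A i" using assms(2) unfolding short_exact_def by auto
  have ih: "i \<in> ar A" "tgt A i = M" using im M_def unfolding mono_def by auto
  have dh: "d \<in> ar A" "src A d = M" using kerd M_def unfolding is_kernel_def by auto
  have ds: "\<exists>s. s \<in> hom A M (src A n) \<and> cmp A s n = idn A (src A n)" and dsn: "n \<in> ar A" "tgt A n = M"
    if "direct_summand A n M" for n
    using that unfolding direct_summand_def is_section_def by auto
  have P1: "direct_summand A m M"
    if sp: "\<And>g \<kappa>. g \<in> hom A M M \<Longrightarrow> is_kernel A \<kappa> (cmp A d g) \<Longrightarrow> is_section A \<kappa>"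
    and a: "direct_summand A n M" "subobj_le A i n" "direct_summand A k M" "is_intersection A k n m" for n k m
  proof -
    obtain s where s: "s \<in> hom A M (src A n)" "cmp A s n = idn A (src A n)" using ds[OF a(1)] by blast
    obtain t where t: "t \<in> hom A M (src A k)" "cmp A t k = idn A (src A k)" using ds[OF a(3)] by blast
    obtain u where u: "u \<in> hom A (src A i) (src A n)" "i = cmp A n u" using a(2) unfolding subobj_le_def by blast
    obtain p1 p2 where pb: "is_pullback A k n p1 p2" and m: "m = cmp A k p1" using a(4) unfolding is_intersection_def by blast
    have gh: "gmap k t n s \<in> hom A M M" using gmap_ar[OF dsn[OF a(1)] s(1) dsn[OF a(3)] t(1)] by (auto simp: hom_def)
    obtain \<kappa> where kap: "is_kernel A \<kappa> (cmp A d (gmap k t n s))" using ker_ex[of "cmp A d (gmap k t n s)"] gh dh by (auto simp: hom_def)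
    have "is_section A (cmp A k p1)"
      using part1(3)[OF kerd ih(2) dsn[OF a(1)] s u dsn[OF a(3)] t pb kap] sp[OF gh kap] by blast
    then show ?thesis using m dsn[OF a(3)] pb unfolding direct_summand_def is_pullback_def hom_def by auto
  qed
  have P2: "fi_direct_summand A m M"
    if sp: "\<And>g \<kappa>. g \<in> hom A M M \<Longrightarrow> is_kernel A \<kappa> (cmp A d g) \<Longrightarrow> is_section A \<kappa> \<and> fully_invariant_mono A \<kappa>"
    and a: "direct_summand A n M" "subobj_le A i n" "fi_direct_summand A k M" "is_intersection A k n m" for n k m
  proof -
    have a3: "direct_summand A k M" "fully_invariant_mono A k" using a(3) unfolding fi_direct_summand_def by auto
    obtain s where s: "s \<in> hom A M (src A n)" "cmp A s n = idn A (src A n)" using ds[OF a(1)] by blast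
    obtain t where t: "t \<in> hom A M (src A k)" "cmp A t k = idn A (src A k)" using ds[OF a3(1)] by blast
    obtain u where u: "u \<in> hom A (src A i) (src A n)" "i = cmp A n u" using a(2) unfolding subobj_le_def by blast
    obtain p1 p2 where pb: "is_pullback A k n p1 p2" and m: "m = cmp A k p1" using a(4) unfolding is_intersection_def by blast
    have gh: "gmap k t n s \<in> hom A M M" using gmap_ar[OF dsn[OF a(1)] s(1) dsn[OF a3(1)] t(1)] by (auto simp: hom_def)
    obtain \<kappa> where kap: "is_kernel A \<kappa> (cmp A d (gmap k t n s))" using ker_ex[of "cmp A d (gmap k t n s)"] gh dh by (auto simp: hom_def)
    note pp = part1[OF kerd ih(2) dsn[OF a(1)] s u dsn[OF a3(1)] t pb kap]
    have sc: "is_section A (cmp A k p1)" using pp(3) sp[OF gh kap] by blast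
    have "fully_invariant_mono A (cmp A k p1)" using pp(4)[OF _ a3(2) sc] sp[OF gh kap] by blast
    then show ?thesis using sc m dsn[OF a3(1)] pb unfolding fi_direct_summand_def direct_summand_def is_pullback_def hom_def by auto
  qed
  have P3: "direct_summand A m M"
    if sp: "\<And>g c. g \<in> hom A M M \<Longrightarrow> is_cokernel A c (cmp A g i) \<Longrightarrow> is_retraction A c"
    and a: "direct_summand A n M" "subobj_le A n i" "direct_summand A k M" "is_sum A k n m" for n k m
  proof -
    obtain s where s: "s \<in> hom A M (src A n)" "cmp A s n = idn A (src A n)" using ds[OF a(1)] by blast
    obtain t where t: "t \<in> hom A M (src A k)" "cmp A t k = idn A (src A k)" using ds[OF a(3)] by blast
    obtain u where u: "u \<in> hom A (src A n) (src A i)" "n = cmp A i u" using a(2) unfolding subobj_le_def by blast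
    have gh: "gmap n s k t \<in> hom A M M" using gmap_ar[OF dsn[OF a(3)] t(1) dsn[OF a(1)] s(1)] by (auto simp: hom_def)
    obtain c where c: "is_cokernel A c (cmp A (gmap n s k t) i)" using coker_ex[of "cmp A (gmap n s k t) i"] gh ih by (auto simp: hom_def)
    have "is_section A m" using part2(1)[OF dsn[OF a(1)] s ih u dsn[OF a(3)] t a(4) c sp[OF gh c]] .
    moreover have "tgt A m = M" using a(4) dsn[OF a(3)] unfolding is_sum_def by auto
    ultimately show ?thesis unfolding direct_summand_def by auto
  qed
  have P4: "fi_direct_summand A m M"
    if sp: "\<And>g c. g \<in> hom A M M \<Longrightarrow> is_cokernel A c (cmp A g i) \<Longrightarrow> is_retraction A c \<and> fully_coinvariant_epi A c"
    and a: "direct_summand A n M" "subobj_le A n i" "fi_direct_summand A k M" "is_sum A k n m" for n k m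
  proof -
    have a3: "direct_summand A k M" "fully_invariant_mono A k" using a(3) unfolding fi_direct_summand_def by auto
    obtain s where s: "s \<in> hom A M (src A n)" "cmp A s n = idn A (src A n)" using ds[OF a(1)] by blast
    obtain t where t: "t \<in> hom A M (src A k)" "cmp A t k = idn A (src A k)" using ds[OF a3(1)] by blast
    obtain u where u: "u \<in> hom A (src A n) (src A i)" "n = cmp A i u" using a(2) unfolding subobj_le_def by blast
    have gh: "gmap n s k t \<in> hom A M M" using gmap_ar[OF dsn[OF a3(1)] t(1) dsn[OF a(1)] s(1)] by (auto simp: hom_def)
    obtain c where c: "is_cokernel A c (cmp A (gmap n s k t) i)" using coker_ex[of "cmp A (gmap n s k t) i"] gh ih by (auto simp: hom_def)
    note pp = part2[OF dsn[OF a(1)] s ih u dsn[OF a3(1)] t a(4) c]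
    have "is_section A m" using pp(1) sp[OF gh c] by blast
    moreover have "fully_invariant_mono A m" using pp(2) sp[OF gh c] a3(2) by blast
    moreover have "tgt A m = M" using a(4) dsn[OF a3(1)] unfolding is_sum_def by auto
    ultimately show ?thesis unfolding fi_direct_summand_def direct_summand_def by auto
  qed
  show ?thesis
    unfolding M_def[symmetric] M_F_split_def strongly_M_F_split_def dual_M_F_split_def dual_strongly_M_F_split_def
    using P1 P2 P3 P4 by (metis M_def)
qed

end
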